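(* Let $G$ be the final graph of the uncoordinated construction (described in the context) on a set $P\subset\mathbb{R}^d$ of $n$ points with parameter $s>1$, and let $\alpha$ be the aspect ratio of $P$. Then every vertex of $G$ has degree $O(\lg\alpha\cdot s^d)$, and the average degree of $G$ is $O(s^d)$, where the implied constants depend only on $d$.
   Context: Fix $d\ge 1$; $|xy|$ is Euclidean distance; $\lg$ is logarithm base 2. The aspect ratio is $\alpha=\max_{u,v\in P}|uv|/\min_{u\ne v\in P}|uv|$. Uncoordinated construction: start with the graph $G$ on vertex set $P$ with no edges. Every ordered pair $(p,q)$ of distinct points of $P$ is processed exactly once, in an arbitrary order, one at a time. When $(p,q)$ is processed, the edge $pq$ is added to $G$ unless $G$ currently contains an edge whose endpoints can be labeled $p',q'$ with $|pp'|\le |p'q'|/(2s+2)$ and $|qq'|\le |p'q'|/(2s+2)$. $G$ is the graph after all pairs are processed. *)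

theory Defs
  imports "HOL-Analysis.Analysis"
begin

text \<open>Edges of the (undirected) graph are represented as 2-element sets.\<close>

definition blocked :: "real \<Rightarrow> 'a::euclidean_space set set \<Rightarrow> 'a \<Rightarrow> 'a \<Rightarrow> bool" where
  "blocked s E p q \<longleftrightarrow>
     (\<exists>p' q'. {p', q'} \<in> E \<and> dist p p' \<le> dist p' q' / (2 * s + 2)
                          \<and> dist q q' \<le> dist p' q' / (2 * s + 2))"

definition process_pair :: "real \<Rightarrow> 'a::euclidean_space set set \<Rightarrow> 'a \<times> 'a \<Rightarrow> 'a set set" where
  "process_pair s E pq = (if blocked s E (fst pq) (snd pq) then E else insert {fst pq, snd pq} E)"

definition uncoord_graph :: "real \<Rightarrow> ('a::euclidean_space \<times> 'a) list \<Rightarrow> 'a set set" where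
  "uncoord_graph s ord = foldl (process_pair s) {} ord"

definition degree :: "'a set set \<Rightarrow> 'a \<Rightarrow> nat" where
  "degree E v = card {u. u \<noteq> v \<and> {v, u} \<in> E}"

definition aspect_ratio :: "'a::euclidean_space set \<Rightarrow> real" where
  "aspect_ratio P = Max {dist u v | u v. u \<in> P \<and> v \<in> P}
                    / Min {dist u v | u v. u \<in> P \<and> v \<in> P \<and> u \<noteq> v}"

end

theory Submission
  imports Defs
begin


definition noconf :: "real \<Rightarrow> 'a::euclidean_space set set \<Rightarrow> bool" where
 "noconf c E \<longleftrightarrow> (\<forall>a b p q. {a,b}\<in>E \<longrightarrow> {p,q}\<in>E \<longrightarrow> {a,b}\<noteq>{p,q} \<longrightarrow>
     \<not>(dist a p \<le> min (dist a b) (dist p q) / c \<and> dist b q \<le> min (dist a b) (dist p q) / c))"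

lemma blockedI:
  assumes "{p,q}\<in>E" "dist x p \<le> dist p q / (2 * s + 2)" "dist y q \<le> dist p q / (2 * s + 2)" "{x,y} = {a,b}"
  shows "blocked s E a b"
proof -
  from assms(4) have "(x=a\<and>y=b) \<or> (x=b\<and>y=a)" by (auto simp: doubleton_eq_iff)
  then show ?thesis
  proof
    assume "x=a\<and>y=b" then show ?thesis using assms unfolding blocked_def by blast
  next
    assume h: "x=b\<and>y=a"
    have "{q,p}\<in>E" using assms(1) by (simp add: insert_commute)
    moreover have "dist a q \<le> dist q p / (2 * s + 2)" "dist b p \<le> dist q p / (2 * s + 2)"
      using assms h by (simp_all add: dist_commute)
    ultimately show ?thesis unfolding blocked_def by blast
  qed
qed

lemma noconf_step:
  assumes "noconf (2 * s + 2) E" "s > 1"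
  shows "noconf (2 * s + 2) (process_pair s E ab)"
proof (cases "blocked s E (fst ab) (snd ab)")
  case True then show ?thesis using assms by (simp add: process_pair_def)
next
  case False
  obtain a b where ab: "ab = (a,b)" by (cases ab)
  have nb: "\<not> blocked s E a b" using False ab by simp
  have c0: "2 * s + 2 > 0" using assms by simp
  have key: False if "{x,y} = {a,b}" "{p,q}\<in>E" "dist x p \<le> min (dist x y) (dist p q) / (2 * s + 2)"
     "dist y q \<le> min (dist x y) (dist p q) / (2 * s + 2)" for x y p q
  proof -
    have "min (dist x y) (dist p q) / (2 * s + 2) \<le> dist p q / (2 * s + 2)"
      using c0 by (simp add: divide_right_mono)
    then show False using blockedI[OF that(2) _ _ that(1), of s] that nb by linarith
  qed
  show ?thesis unfolding noconf_def
  proof (intro allI impI notI)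
    fix x y p q
    assume h1: "{x,y} \<in> process_pair s E ab" and h2: "{p,q} \<in> process_pair s E ab"
      and ne: "{x,y} \<noteq> {p,q}" and cf: "dist x p \<le> min (dist x y) (dist p q) / (2 * s + 2) \<and>
           dist y q \<le> min (dist x y) (dist p q) / (2 * s + 2)"
    have E': "process_pair s E ab = insert {a,b} E" using nb ab by (simp add: process_pair_def)
    consider "{x,y}\<in>E" "{p,q}\<in>E" | "{x,y} = {a,b}" "{p,q}\<in>E" | "{p,q}={a,b}" "{x,y}\<in>E"
    proof -
      have A: "{x,y} = {a,b} \<or> {x,y} \<in> E" using h1 E' by simp
      have B: "{p,q} = {a,b} \<or> {p,q} \<in> E" using h2 E' by simp
      show ?thesis using A B ne that by fast
    qed
    then show False
    proof (cases)
      case 1 then show ?thesis using assms(1) ne cf unfolding noconf_def by blast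
    next
      case 2 then show ?thesis using key cf by blast
    next
      case 3 then show ?thesis using key[of p q x y] cf by (simp add: dist_commute min.commute)
    qed
  qed
qed

lemma noconf_foldl:
  assumes "noconf (2 * s + 2) E" "s > 1"
  shows "noconf (2 * s + 2) (foldl (process_pair s) E xs)"
  using assms
proof (induction xs arbitrary: E)
  case Nil then show ?case by simp
next
  case (Cons x xs) then show ?case using noconf_step[of s E x] by simp
qed

lemma foldl_sub:
  "foldl (process_pair s) E xs \<subseteq> E \<union> {{p,q} | p q. (p,q) \<in> set xs}"
proof (induction xs arbitrary: E)
  case Nil then show ?case by simp
next
  case (Cons x xs)
  have 1: "process_pair s E x \<subseteq> E \<union> {{p,q} | p q. (p,q) \<in> set (x#xs)}"
  proof (cases x)
    case (Pair a b) then show ?thesis by (auto simp: process_pair_def)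
  qed
  have "foldl (process_pair s) E (x#xs) = foldl (process_pair s) (process_pair s E x) xs" by simp
  also have "\<dots> \<subseteq> process_pair s E x \<union> {{p,q} | p q. (p,q) \<in> set xs}" by (rule Cons)
  also have "\<dots> \<subseteq> E \<union> {{p,q} | p q. (p,q) \<in> set (x#xs)}" using 1 by auto
  finally show ?case .
qed

lemma graph_props:
  assumes "s > 1" "set ord = {(p, q). p \<in> P \<and> q \<in> P \<and> p \<noteq> q}"
  shows "noconf (2 * s + 2) (uncoord_graph s ord)"
    and "\<And>u v. {u,v} \<in> uncoord_graph s ord \<Longrightarrow> u \<in> P \<and> v \<in> P \<and> u \<noteq> v"
proof -
  show "noconf (2 * s + 2) (uncoord_graph s ord)"
    unfolding uncoord_graph_def by (rule noconf_foldl) (auto simp: noconf_def assms)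
  fix u v assume "{u,v} \<in> uncoord_graph s ord"
  then obtain p q where "{u,v} = {p,q}" "(p,q)\<in>set ord"
    using foldl_sub[of s "{}" ord] unfolding uncoord_graph_def by blast
  then show "u \<in> P \<and> v \<in> P \<and> u \<noteq> v" using assms(2) by (auto simp: doubleton_eq_iff)
qed




lemma box_card:
  "card (PiE (Basis::'a::euclidean_space set) (\<lambda>i. {a i - int M .. a i + int M})) = (2*M+1)^DIM('a)"
proof -
  have "card (PiE (Basis::'a set) (\<lambda>i. {a i - int M .. a i + int M})) = (\<Prod>i\<in>Basis. card {a i - int M .. a i + int M})"
    by (simp add: card_PiE)
  also have "\<dots> = (\<Prod>i\<in>(Basis::'a set). 2*M+1)" by (intro prod.cong) auto
  finally show ?thesis by simp
qed

lemma box_finite: "finite (PiE (Basis::'a::euclidean_space set) (\<lambda>i. {a i - int M .. a i + int M}))"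
  by (simp add: finite_PiE)

lemma floor_close:
  fixes x y h :: real
  assumes "\<lfloor>x / h\<rfloor> = \<lfloor>y / h\<rfloor>" "h > 0"
  shows "\<bar>x - y\<bar> < h"
proof -
  have f1: "of_int \<lfloor>x / h\<rfloor> \<le> x / h" "x / h < of_int \<lfloor>x / h\<rfloor> + 1" by linarith+
  have f2: "of_int \<lfloor>y / h\<rfloor> \<le> y / h" "y / h < of_int \<lfloor>y / h\<rfloor> + 1" by linarith+
  have a: "\<bar>x/h - y/h\<bar> < 1" using f1 f2 assms(1) by linarith
  have "x - y = h * (x/h - y/h)" using assms(2) by (simp add: field_simps)
  then have "\<bar>x - y\<bar> = h * \<bar>x/h - y/h\<bar>" using assms(2) by (simp add: abs_mult)
  also have "\<dots> < h * 1" using a assms(2) by (intro mult_strict_left_mono) auto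
  finally show ?thesis by simp
qed

lemma l1_small:
  fixes x :: "'a::euclidean_space"
  assumes "\<And>i. i \<in> Basis \<Longrightarrow> \<bar>x \<bullet> i\<bar> < h"
  shows "norm x < real DIM('a) * h"
proof -
  have "norm x \<le> (\<Sum>b\<in>Basis. \<bar>x \<bullet> b\<bar>)" by (rule norm_le_l1)
  also have "\<dots> < (\<Sum>b\<in>(Basis::'a set). h)"
    by (rule sum_strict_mono) (auto simp: assms)
  finally show ?thesis by simp
qed

lemma pack:
  fixes S :: "'a::euclidean_space set" and v :: 'a
  assumes h: "h > 0" and R: "\<And>u. u\<in>S \<Longrightarrow> norm (u - v) \<le> real M * h"
    and sep: "\<And>u w. u\<in>S \<Longrightarrow> w\<in>S \<Longrightarrow> u \<noteq> w \<Longrightarrow> real DIM('a) * h \<le> dist u w"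
  shows "card S \<le> (2*M+1)^DIM('a)"
proof -
  define g where "g u = restrict (\<lambda>i. \<lfloor>((u - v) \<bullet> i) / h\<rfloor>) Basis" for u
  have inj: "inj_on g S"
  proof (rule inj_onI, rule ccontr)
    fix u w assume u: "u\<in>S" and w: "w\<in>S" and eq: "g u = g w" and ne: "u \<noteq> w"
    have "\<bar>(u - w) \<bullet> i\<bar> < h" if i: "i \<in> Basis" for i
    proof -
      have "\<lfloor>((u - v) \<bullet> i) / h\<rfloor> = \<lfloor>((w - v) \<bullet> i) / h\<rfloor>"
        using fun_cong[OF eq, of i] i by (simp add: g_def)
      from floor_close[OF this h] show ?thesis by (simp add: inner_diff_left)
    qed
    then have "norm (u - w) < real DIM('a) * h" by (rule l1_small)
    with sep[OF u w ne] show False by (simp add: dist_norm)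
  qed
  have sub: "g ` S \<subseteq> PiE Basis (\<lambda>i. {0 - int M .. 0 + int M})"
  proof
    fix y assume "y \<in> g ` S"
    then obtain u where u: "u\<in>S" "y = g u" by auto
    have "\<lfloor>((u - v) \<bullet> i) / h\<rfloor> \<in> {0 - int M .. 0 + int M}" if i: "i\<in>Basis" for i
    proof -
      define t where "t = (u - v) \<bullet> i"
      have "\<bar>t\<bar> \<le> norm (u - v)" using i unfolding t_def by (rule Basis_le_norm)
      also have "\<dots> \<le> real M * h" using R[OF u(1)] .
      finally have a: "\<bar>t\<bar> \<le> real M * h" .
      have b1: "t / h \<le> real M" using a h by (simp add: pos_divide_le_eq)
      have b2: "- real M \<le> t / h" using a h by (simp add: pos_le_divide_eq)
      have c1: "\<lfloor>t / h\<rfloor> \<le> int M" using b1 by (simp add: floor_le_iff)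
      have c2: "- int M \<le> \<lfloor>t / h\<rfloor>" using b2 by (simp add: le_floor_iff)
      show ?thesis using c1 c2 unfolding t_def by simp
    qed
    then show "y \<in> PiE Basis (\<lambda>i. {0 - int M .. 0 + int M})" using u unfolding g_def
      by (simp only: restrict_PiE_iff) blast
  qed
  have "card S \<le> card (PiE (Basis::'a set) (\<lambda>i. {0 - int M .. 0 + int M}))"
    by (rule card_inj_on_le[OF inj sub]) (simp add: finite_PiE)
  also have "\<dots> = (2*M+1)^DIM('a)" using box_card[where a="\<lambda>_. 0"] by simp
  finally show ?thesis .
qed




lemma pow_ivl:
  fixes t :: real assumes "t \<ge> 1"
  shows "2 ^ nat \<lfloor>log 2 t\<rfloor> \<le> t" "t < 2 ^ Suc (nat \<lfloor>log 2 t\<rfloor>)"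
proof -
  define l where "l = log 2 t"
  have t0: "t > 0" using assms by simp
  have l0: "l \<ge> 0" unfolding l_def using assms by simp
  define n where "n = nat \<lfloor>l\<rfloor>"
  have rn: "real n = of_int \<lfloor>l\<rfloor>" unfolding n_def using l0 by simp
  have n1: "real n \<le> l" "l < real n + 1" using rn by linarith+
  have tl: "t = 2 powr l" unfolding l_def using t0 by simp
  have "(2::real) ^ n = 2 powr (real n)" by (simp add: powr_realpow)
  also have "\<dots> \<le> 2 powr l" using n1(1) by (intro powr_mono) auto
  finally show "2 ^ nat \<lfloor>log 2 t\<rfloor> \<le> t" using tl unfolding n_def l_def by simp
  have "2 powr l < 2 powr (real n + 1)" using n1(2) by (intro powr_less_mono) auto
  also have "\<dots> = (2::real) ^ Suc n" by (simp add: powr_realpow[symmetric] powr_add)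
  finally show "t < 2 ^ Suc (nat \<lfloor>log 2 t\<rfloor>)" using tl unfolding n_def l_def by simp
qed

lemma annulus_card:
  fixes v :: "'a::euclidean_space" and E :: "'a set set"
  assumes nc: "noconf c E" and c: "c > 0" and d: "\<delta> > 0"
    and M: "2 * c * real DIM('a) \<le> real M"
  shows "card {u. u \<noteq> v \<and> {v,u} \<in> E \<and> \<delta> * 2^k \<le> dist v u \<and> dist v u < \<delta> * 2^(Suc k)}
           \<le> (2*M+1)^DIM('a)"
proof (rule pack[where v=v and h="\<delta> * 2^k / (c * real DIM('a))"])
  define h where "h = \<delta> * 2^k / (c * real DIM('a))"
  have dpos: "real DIM('a) > 0" by simp
  show hpos: "\<delta> * 2^k / (c * real DIM('a)) > 0" using c d by simp
  have hd: "real DIM('a) * h = \<delta> * 2^k / c" unfolding h_def using dpos by (simp add: field_simps)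
  have hM: "\<delta> * 2^(Suc k) \<le> real M * h"
  proof -
    have "\<delta> * 2^(Suc k) = (2 * c * real DIM('a)) * h" unfolding h_def using c dpos by (simp add: field_simps)
    also have "\<dots> \<le> real M * h" using M hpos unfolding h_def by (intro mult_right_mono) auto
    finally show ?thesis .
  qed
  fix u assume "u \<in> {u. u \<noteq> v \<and> {v,u} \<in> E \<and> \<delta> * 2^k \<le> dist v u \<and> dist v u < \<delta> * 2^(Suc k)}"
  then have "dist v u < \<delta> * 2^(Suc k)" by simp
  then show "norm (u - v) \<le> real M * h" using hM by (simp add: dist_norm norm_minus_commute)
next
  define h where "h = \<delta> * 2^k / (c * real DIM('a))"
  have dpos: "real DIM('a) > 0" by simp
  have hd: "real DIM('a) * h = \<delta> * 2^k / c" unfolding h_def using dpos by (simp add: field_simps)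
  fix u w
  assume u: "u \<in> {u. u \<noteq> v \<and> {v,u} \<in> E \<and> \<delta> * 2^k \<le> dist v u \<and> dist v u < \<delta> * 2^(Suc k)}"
    and w: "w \<in> {u. u \<noteq> v \<and> {v,u} \<in> E \<and> \<delta> * 2^k \<le> dist v u \<and> dist v u < \<delta> * 2^(Suc k)}"
    and ne: "u \<noteq> w"
  have ne2: "{v,u} \<noteq> {v,w}" using u ne by (auto simp: doubleton_eq_iff)
  define m where "m = min (dist v u) (dist v w)"
  have m0: "0 \<le> m / c" unfolding m_def using c by simp
  have "\<not> (dist v v \<le> m / c \<and> dist u w \<le> m / c)"
    using nc u w ne2 unfolding noconf_def m_def by blast
  then have lt: "m / c < dist u w" using m0 by simp
  have "\<delta> * 2^k \<le> m" unfolding m_def using u w by simp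
  then have "\<delta> * 2^k / c \<le> m / c" using c by (simp add: divide_right_mono)
  then show "real DIM('a) * h \<le> dist u w" using lt hd by simp
qed

lemma degree_bound:
  fixes v :: "'a::euclidean_space" and E :: "'a set set"
  assumes nc: "noconf c E" and c: "c > 0" and d: "\<delta> > 0"
    and M: "2 * c * real DIM('a) \<le> real M"
    and fin: "finite {u. u \<noteq> v \<and> {v,u} \<in> E}"
    and rng: "\<And>u. u \<noteq> v \<Longrightarrow> {v,u} \<in> E \<Longrightarrow> \<delta> \<le> dist v u \<and> dist v u \<le> \<Delta>"
  shows "degree E v \<le> (nat \<lfloor>log 2 (\<Delta>/\<delta>)\<rfloor> + 1) * (2*M+1)^DIM('a)"
proof -
  define K where "K = nat \<lfloor>log 2 (\<Delta>/\<delta>)\<rfloor>"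
  define A where "A k = {u. u \<noteq> v \<and> {v,u} \<in> E \<and> \<delta> * 2^k \<le> dist v u \<and> dist v u < \<delta> * 2^(Suc k)}" for k :: nat
  have sub: "{u. u \<noteq> v \<and> {v,u} \<in> E} \<subseteq> (\<Union>k\<in>{..K}. A k)"
  proof
    fix u assume "u \<in> {u. u \<noteq> v \<and> {v,u} \<in> E}"
    then have u: "u \<noteq> v" "{v,u} \<in> E" by auto
    define t where "t = dist v u / \<delta>"
    have r: "\<delta> \<le> dist v u" "dist v u \<le> \<Delta>" using rng[OF u] by auto
    have t1: "t \<ge> 1" unfolding t_def using r d by simp
    define k where "k = nat \<lfloor>log 2 t\<rfloor>"
    have p: "2^k \<le> t" "t < 2^Suc k" using pow_ivl[OF t1] unfolding k_def by auto
    have "\<delta> * 2^k \<le> dist v u" using p(1) d unfolding t_def by (simp add: field_simps)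
    moreover have "dist v u < \<delta> * 2^Suc k" using p(2) d unfolding t_def by (simp add: field_simps)
    moreover have "k \<le> K"
    proof -
      have "t \<le> \<Delta>/\<delta>" unfolding t_def using r d by (simp add: divide_right_mono)
      then have "log 2 t \<le> log 2 (\<Delta>/\<delta>)" using t1 by simp
      then show ?thesis unfolding k_def K_def by (intro nat_mono floor_mono)
    qed
    ultimately show "u \<in> (\<Union>k\<in>{..K}. A k)" using u unfolding A_def by auto
  qed
  have "degree E v = card {u. u \<noteq> v \<and> {v,u} \<in> E}" unfolding degree_def ..
  also have "\<dots> \<le> card (\<Union>k\<in>{..K}. A k)"
  proof (rule card_mono[OF _ sub])
    have "A k \<subseteq> {u. u \<noteq> v \<and> {v,u} \<in> E}" for k unfolding A_def by auto
    then show "finite (\<Union>k\<in>{..K}. A k)" using fin by (meson finite_UN_I finite_atMost finite_subset)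
  qed
  also have "\<dots> \<le> (\<Sum>k\<in>{..K}. card (A k))" by (rule card_UN_le) simp
  also have "\<dots> \<le> (\<Sum>k\<in>{..K}. (2*M+1)^DIM('a))"
    by (rule sum_mono) (unfold A_def, rule annulus_card[OF nc c d M])
  also have "\<dots> = (K + 1) * (2*M+1)^DIM('a)" by simp
  finally show ?thesis unfolding K_def .
qed




definition pw :: "int \<Rightarrow> real" where "pw j = 2 powr (real_of_int j)"

lemma pw_pos[simp]: "pw j > 0" by (simp add: pw_def)
lemma pw_Suc: "pw (j + 1) = 2 * pw j" by (simp add: pw_def powr_add)
lemma pw_mono: "j \<le> k \<Longrightarrow> pw j \<le> pw k" by (simp add: pw_def)

lemma floor_half: "\<lfloor>a / (2 * p)\<rfloor> = \<lfloor>a / p\<rfloor> div 2" for a p :: real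
proof -
  have "a / (2 * p) = (a / p) / real_of_int 2" by simp
  then show ?thesis using floor_divide_real_eq_div[of 2 "a/p"] by (simp add: mult.commute)
qed

lemma floor_diff_bound:
  fixes a b :: real
  shows "\<bar>real_of_int (\<lfloor>a\<rfloor> - \<lfloor>b\<rfloor>)\<bar> < \<bar>a - b\<bar> + 1"
  by linarith

locale cells =
  fixes P :: "'a::euclidean_space set" and R0 :: real and J0 :: int and f :: "'a \<Rightarrow> nat"
  assumes finP: "finite P"
    and R0: "\<And>p. p \<in> P \<Longrightarrow> norm p \<le> R0"
    and J0: "2 * R0 < pw J0"
    and injf: "inj_on f P"
begin

definition cell :: "int \<Rightarrow> 'a \<Rightarrow> 'a \<Rightarrow> int" where
  "cell j x = restrict (\<lambda>i. \<lfloor>(x \<bullet> i + R0) / pw j\<rfloor>) Basis"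

definition C :: "int \<Rightarrow> 'a \<Rightarrow> 'a set" where
  "C j x = {y\<in>P. cell j y = cell j x}"

lemma nest1:
  assumes "cell j y = cell j x" shows "cell (j+1) y = cell (j+1) x"
proof
  fix i show "cell (j+1) y i = cell (j+1) x i"
  proof (cases "i \<in> Basis")
    case True
    have "\<lfloor>(y \<bullet> i + R0) / pw j\<rfloor> = \<lfloor>(x \<bullet> i + R0) / pw j\<rfloor>"
      using fun_cong[OF assms, of i] True by (simp add: cell_def)
    then show ?thesis using True by (simp add: cell_def pw_Suc floor_half)
  next
    case False then show ?thesis by (simp add: cell_def)
  qed
qed

lemma nest:
  assumes "j \<le> k" "cell j y = cell j x" shows "cell k y = cell k x"
proof -
  obtain n where k: "k = j + int n" using assms(1) by (metis le_Suc_ex zle_iff_zadd)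
  have "cell (j + int n) y = cell (j + int n) x" for n
  proof (induction n)
    case 0 then show ?case using assms(2) by simp
  next
    case (Suc n)
    have "j + int (Suc n) = (j + int n) + 1" by simp
    then show ?case using nest1[of "j + int n" y x] Suc by (metis)
  qed
  then show ?thesis using k by simp
qed

lemma C_mono: "j \<le> k \<Longrightarrow> C j x \<subseteq> C k x"
  unfolding C_def using nest by blast

lemma C_self: "x \<in> P \<Longrightarrow> x \<in> C j x" by (simp add: C_def)

lemma C_sub: "C j x \<subseteq> P" by (auto simp: C_def)

lemma C_eq: "y \<in> C j x \<Longrightarrow> C j y = C j x" by (auto simp: C_def)

lemma C_diam:
  assumes "y \<in> C j x" shows "dist x y < real DIM('a) * pw j"
proof -
  have "\<bar>(x - y) \<bullet> i\<bar> < pw j" if i: "i \<in> Basis" for i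
  proof -
    have "\<lfloor>(x \<bullet> i + R0) / pw j\<rfloor> = \<lfloor>(y \<bullet> i + R0) / pw j\<rfloor>"
    proof -
      have "cell j y = cell j x" using assms by (simp add: C_def)
      from fun_cong[OF this, of i] show ?thesis using i by (simp add: cell_def)
    qed
    from floor_close[OF this pw_pos] show ?thesis by (simp add: inner_diff_left)
  qed
  then have "norm (x - y) < real DIM('a) * pw j" by (rule l1_small)
  then show ?thesis by (simp add: dist_norm)
qed

lemma cell_close:
  assumes "i \<in> Basis"
  shows "\<bar>real_of_int (cell j x i - cell j y i)\<bar> < dist x y / pw j + 1"
proof -
  have "\<bar>real_of_int (cell j x i - cell j y i)\<bar> < \<bar>(x \<bullet> i + R0) / pw j - (y \<bullet> i + R0) / pw j\<bar> + 1"
    using assms floor_diff_bound by (simp add: cell_def)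
  also have "\<bar>(x \<bullet> i + R0) / pw j - (y \<bullet> i + R0) / pw j\<bar> = \<bar>(x - y) \<bullet> i\<bar> / pw j"
    by (simp add: diff_divide_distrib[symmetric] inner_diff_left abs_div_pos)
  also have "\<bar>(x - y) \<bullet> i\<bar> / pw j \<le> dist x y / pw j"
    using Basis_le_norm[OF assms, of "x - y"] unfolding dist_norm by (rule divide_right_mono) (simp add: less_imp_le)
  finally show ?thesis by simp
qed

lemma C_top:
  assumes "J0 \<le> j" "x \<in> P" shows "C j x = P"
proof -
  have "cell j y = cell j x" if y: "y \<in> P" for y
  proof -
    have z: "cell j z = restrict (\<lambda>i. 0) Basis" if z: "z \<in> P" for z
    proof
      fix i show "cell j z i = restrict (\<lambda>i. 0) Basis i"
      proof (cases "i \<in> Basis")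
        case True
        have a: "\<bar>z \<bullet> i\<bar> \<le> R0" using Basis_le_norm[OF True, of z] R0[OF z] by simp
        have b: "2 * R0 < pw j" using J0 pw_mono[OF assms(1)] by simp
        have "0 \<le> (z \<bullet> i + R0) / pw j" using a by (intro divide_nonneg_pos) auto
        moreover have "(z \<bullet> i + R0) / pw j < 1" using a b by (simp add: divide_less_eq)
        ultimately have "\<lfloor>(z \<bullet> i + R0) / pw j\<rfloor> = 0" by (simp add: floor_eq_iff)
        then show ?thesis using True by (simp add: cell_def)
      next
        case False then show ?thesis by (simp add: cell_def)
      qed
    qed
    show ?thesis using z[OF y] z[OF assms(2)] by simp
  qed
  then show ?thesis unfolding C_def by auto
qed

end



context cells begin

definition Fp :: "'a set set" where "Fp = {C j x | j x. x \<in> P} - {P}"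
definition top :: "'a set \<Rightarrow> int" where
  "top S = J0 - int (LEAST k. \<exists>x\<in>P. C (J0 - int k) x = S)"
definition rep :: "'a set \<Rightarrow> 'a" where "rep S = arg_min f (\<lambda>x. x \<in> S)"
definition parent :: "'a set \<Rightarrow> 'a set" where "parent S = C (top S + 1) (rep S)"

lemma Fp_lev: "S \<in> Fp \<Longrightarrow> x \<in> P \<Longrightarrow> C j x = S \<Longrightarrow> j < J0"
proof (rule ccontr)
  assume a: "S \<in> Fp" "x \<in> P" "C j x = S" "\<not> j < J0"
  then have "C j x = P" using C_top[of j x] by simp
  then show False using a unfolding Fp_def by simp
qed

lemma top_props:
  assumes "S \<in> Fp"
  shows "\<exists>x\<in>P. C (top S) x = S" and "\<And>x j. x \<in> P \<Longrightarrow> C j x = S \<Longrightarrow> j \<le> top S"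
proof -
  define Q where "Q k = (\<exists>x\<in>P. C (J0 - int k) x = S)" for k
  obtain j x where jx: "x \<in> P" "S = C j x" using assms unfolding Fp_def by auto
  have "j < J0" using Fp_lev[OF assms jx(1) jx(2)[symmetric]] .
  then have "J0 - int (nat (J0 - j)) = j" by simp
  then have "Q (nat (J0 - j))" unfolding Q_def using jx by auto
  then have LQ: "Q (Least Q)" by (rule LeastI)
  then show "\<exists>x\<in>P. C (top S) x = S" unfolding Q_def top_def by simp
  fix y i assume y: "y \<in> P" "C i y = S"
  have "i < J0" using Fp_lev[OF assms y] .
  then have e: "J0 - int (nat (J0 - i)) = i" by simp
  then have "Q (nat (J0 - i))" unfolding Q_def using y by auto
  then have "Least Q \<le> nat (J0 - i)" by (rule Least_le)
  then show "i \<le> top S" unfolding top_def Q_def[symmetric] using e by linarith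
qed

lemma Fp_sub: "S \<in> Fp \<Longrightarrow> S \<subseteq> P" unfolding Fp_def using C_sub by auto

lemma Fp_ne: assumes "S \<in> Fp" shows "S \<noteq> {}"
proof -
  obtain j x where "x \<in> P" "S = C j x" using assms unfolding Fp_def by auto
  then show ?thesis using C_self by blast
qed

lemma top3: assumes "S \<in> Fp" "x \<in> S" shows "C (top S) x = S"
proof -
  obtain y where "y \<in> P" "C (top S) y = S" using top_props(1)[OF assms(1)] by blast
  then show ?thesis using C_eq assms(2) by blast
qed

lemma top4: assumes "S \<in> Fp" "x \<in> S" shows "C (top S + 1) x \<noteq> S"
proof
  assume "C (top S + 1) x = S"
  from top_props(2)[OF assms(1) _ this] show False using Fp_sub[OF assms(1)] assms(2) by auto
qed

lemma rep_props:
  assumes "S \<subseteq> P" "S \<noteq> {}" shows "rep S \<in> S" "\<And>y. y \<in> S \<Longrightarrow> f (rep S) \<le> f y"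
proof -
  obtain k where "k \<in> S" using assms(2) by auto
  from arg_min_nat_lemma[of "\<lambda>x. x \<in> S" k f, OF this]
  show "rep S \<in> S" "\<And>y. y \<in> S \<Longrightarrow> f (rep S) \<le> f y" unfolding rep_def by auto
qed

lemma rep_sub:
  assumes "S \<subseteq> T" "T \<subseteq> P" "rep T \<in> S" shows "rep S = rep T"
proof -
  have Sne: "S \<noteq> {}" using assms(3) by auto
  have Tne: "T \<noteq> {}" using assms by auto
  have SP: "S \<subseteq> P" using assms by auto
  have a: "rep S \<in> S" using rep_props(1)[OF SP Sne] .
  have "f (rep S) \<le> f (rep T)" using rep_props(2)[OF SP Sne assms(3)] .
  moreover have "f (rep T) \<le> f (rep S)" using rep_props(2)[OF assms(2) Tne] a assms(1) by auto
  ultimately have "f (rep S) = f (rep T)" by simp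
  moreover have "rep S \<in> P" "rep T \<in> P" using a SP assms(3) by auto
  ultimately show ?thesis using injf by (simp add: inj_on_eq_iff)
qed

lemma rep_in: assumes "S \<in> Fp" shows "rep S \<in> S"
  by (rule rep_props(1)[OF Fp_sub[OF assms] Fp_ne[OF assms]])

lemma parent_eq: assumes "S \<in> Fp" "x \<in> S" shows "parent S = C (top S + 1) x"
proof -
  have r: "rep S \<in> S" using rep_in[OF assms(1)] .
  have "x \<in> C (top S) (rep S)" using top3[OF assms(1) r] assms(2) by simp
  then have "x \<in> C (top S + 1) (rep S)" using C_mono[of "top S" "top S + 1"] by auto
  then have "C (top S + 1) x = C (top S + 1) (rep S)" by (rule C_eq)
  then show ?thesis unfolding parent_def by simp
qed

lemma parent_sup: assumes "S \<in> Fp" shows "S \<subseteq> parent S" "S \<noteq> parent S" "parent S \<subseteq> P"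
proof -
  have r: "rep S \<in> S" using rep_in[OF assms(1)] .
  have e: "C (top S) (rep S) = S" using top3[OF assms r] .
  have m: "C (top S) (rep S) \<subseteq> C (top S + 1) (rep S)" by (rule C_mono) simp
  show "S \<subseteq> parent S" unfolding parent_def using e m by simp
  show "S \<noteq> parent S" unfolding parent_def using top4[OF assms r] by simp
  show "parent S \<subseteq> P" unfolding parent_def by (rule C_sub)
qed

lemma lam_lt:
  assumes "S \<in> Fp" "T \<in> Fp" "x \<in> S" "x \<in> T" "top S < top T" shows "parent S \<subseteq> T"
proof -
  have "parent S = C (top S + 1) x" using parent_eq[OF assms(1) assms(3)] .
  also have "\<dots> \<subseteq> C (top T) x" using assms(5) by (intro C_mono) simp
  also have "\<dots> = T" using top3[OF assms(2) assms(4)] .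
  finally show ?thesis .
qed

lemma lam_eq:
  assumes "S \<in> Fp" "T \<in> Fp" "x \<in> S" "x \<in> T" "top S = top T" shows "S = T"
proof -
  have "S = C (top S) x" using top3[OF assms(1,3)] by simp
  also have "\<dots> = C (top T) x" using assms(5) by simp
  also have "\<dots> = T" using top3[OF assms(2,4)] .
  finally show ?thesis .
qed

lemma Fp_finite: "finite Fp"
proof -
  have "Fp \<subseteq> Pow P" using Fp_sub by auto
  then show ?thesis using finP by (meson finite_Pow_iff finite_subset)
qed

lemma card_Fp: "card Fp \<le> 2 * card P"
proof -
  define A where "A = {S\<in>Fp. rep S \<noteq> rep (parent S)}"
  define B where "B = Fp - A"
  have injA: "inj_on rep A"
  proof (rule inj_onI, rule ccontr)
    fix S1 S2 assume S1: "S1 \<in> A" and S2: "S2 \<in> A" and eq: "rep S1 = rep S2" and ne: "S1 \<noteq> S2"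
    have F1: "S1 \<in> Fp" and F2: "S2 \<in> Fp" using S1 S2 unfolding A_def by auto
    have x1: "rep S1 \<in> S1" and x2: "rep S1 \<in> S2" using rep_in[OF F1] rep_in[OF F2] eq by auto
    have "top S1 \<noteq> top S2" using lam_eq[OF F1 F2 x1 x2] ne by blast
    then consider "top S1 < top S2" | "top S2 < top S1" by linarith
    then show False
    proof cases
      case 1
      have ps: "parent S1 \<subseteq> S2" using lam_lt[OF F1 F2 x1 x2 1] .
      have "rep S2 \<in> parent S1" using x1 parent_sup(1)[OF F1] eq by auto
      then have "rep (parent S1) = rep S2" using rep_sub[OF ps Fp_sub[OF F2]] by simp
      then show False using S1 eq unfolding A_def by simp
    next
      case 2
      have ps: "parent S2 \<subseteq> S1" using lam_lt[OF F2 F1 x2 x1 2] .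
      have "rep S1 \<in> parent S2" using x2 parent_sup(1)[OF F2] by auto
      then have "rep (parent S2) = rep S1" using rep_sub[OF ps Fp_sub[OF F1]] by simp
      then show False using S2 eq unfolding A_def by simp
    qed
  qed
  have cA: "card A \<le> card P"
  proof (rule card_inj_on_le[OF injA _ finP])
    show "rep ` A \<subseteq> P" using rep_in Fp_sub unfolding A_def by blast
  qed
  have injB: "inj_on parent B"
  proof (rule inj_onI, rule ccontr)
    fix S1 S2 assume S1: "S1 \<in> B" and S2: "S2 \<in> B" and eq: "parent S1 = parent S2" and ne: "S1 \<noteq> S2"
    have F1: "S1 \<in> Fp" and F2: "S2 \<in> Fp" using S1 S2 unfolding B_def by auto
    have r: "rep S1 = rep S2" using S1 S2 eq unfolding A_def B_def by auto
    have x1: "rep S1 \<in> S1" and x2: "rep S1 \<in> S2" using rep_in[OF F1] rep_in[OF F2] r by auto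
    have "top S1 \<noteq> top S2" using lam_eq[OF F1 F2 x1 x2] ne by blast
    then consider "top S1 < top S2" | "top S2 < top S1" by linarith
    then show False
    proof cases
      case 1
      have "parent S1 \<subseteq> S2" using lam_lt[OF F1 F2 x1 x2 1] .
      then show False using parent_sup(1,2)[OF F2] eq by auto
    next
      case 2
      have "parent S2 \<subseteq> S1" using lam_lt[OF F2 F1 x2 x1 2] .
      then show False using parent_sup(1,2)[OF F1] eq by auto
    qed
  qed
  have parA: "parent ` Fp \<subseteq> parent ` A"
  proof
    fix Q assume "Q \<in> parent ` Fp"
    then obtain S where S: "S \<in> Fp" "Q = parent S" by auto
    show "Q \<in> parent ` A"
    proof (cases "S \<in> A")
      case True then show ?thesis using S by auto
    next
      case False
      then have rS: "rep Q = rep S" using S unfolding A_def by auto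
      define t where "t = top S"
      define x where "x = rep S"
      have xS: "x \<in> S" unfolding x_def using rep_in[OF S(1)] .
      have Qx: "Q = C (t + 1) x" unfolding t_def using parent_eq[OF S(1) xS] S(2) by simp
      obtain y where y: "y \<in> Q" "y \<notin> S" using parent_sup(1,2)[OF S(1)] S(2) by auto
      have yP: "y \<in> P" using y(1) parent_sup(3)[OF S(1)] S(2) by auto
      have xP: "x \<in> P" using xS Fp_sub[OF S(1)] by auto
      define U where "U = C t y"
      have St: "S = C t x" unfolding t_def using top3[OF S(1) xS] by simp
      have xU: "x \<notin> U"
      proof
        assume "x \<in> U"
        then have "C t x = C t y" unfolding U_def using C_eq by blast
        then show False using y(2) St C_self[OF yP] by simp
      qed
      have UP: "U \<noteq> P" using xU xP by auto
      have UF: "U \<in> Fp" unfolding Fp_def using yP UP U_def by auto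
      have yU: "y \<in> U" unfolding U_def using C_self[OF yP] .
      have t1: "t \<le> top U" using top_props(2)[OF UF yP] U_def by simp
      have t2: "\<not> t < top U"
      proof
        assume "t < top U"
        then have "C (t + 1) y \<subseteq> C (top U) y" by (intro C_mono) simp
        also have "\<dots> = U" using top3[OF UF yU] .
        finally have "C (t + 1) y \<subseteq> U" .
        moreover have "C (t + 1) y = Q" using Qx y(1) C_eq by blast
        moreover have "x \<in> Q" using Qx C_self[OF xP] by simp
        ultimately show False using xU by auto
      qed
      have tU: "top U = t" using t1 t2 by simp
      have pU: "parent U = Q" using parent_eq[OF UF yU] tU Qx y(1) C_eq by metis
      have "rep U \<in> U" using rep_in[OF UF] .
      moreover have "rep Q \<in> S" using rS xS x_def by simp
      moreover have "S \<inter> U = {}"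
      proof (rule ccontr)
        assume "S \<inter> U \<noteq> {}"
        then obtain z where z: "z \<in> S" "z \<in> U" by auto
        have "C t z = U" using C_eq[of z t y] z(2) U_def by simp
        moreover have "C t z = S" using C_eq[of z t x] z(1) St by simp
        ultimately show False using xU xS by simp
      qed
      ultimately have "rep U \<noteq> rep (parent U)" using pU by auto
      then have "U \<in> A" using UF unfolding A_def by simp
      then show ?thesis using pU by force
    qed
  qed
  have cB: "card B \<le> card A"
  proof -
    have "card B = card (parent ` B)" using card_image[OF injB] by simp
    also have "\<dots> \<le> card (parent ` A)"
      by (rule card_mono) (use Fp_finite parA in \<open>auto simp: A_def B_def\<close>)
    also have "\<dots> \<le> card A" by (rule card_image_le) (use Fp_finite in \<open>simp add: A_def\<close>)
    finally show ?thesis .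
  qed
  have "card Fp = card A + card B"
  proof -
    have "Fp = A \<union> B" "A \<inter> B = {}" unfolding B_def A_def by auto
    then show ?thesis using Fp_finite by (simp add: card_Un_disjoint)
  qed
  then show ?thesis using cA cB by linarith
qed

end



lemma log_ivl:
  fixes t :: real assumes "t > 0"
  shows "pw \<lfloor>log 2 t\<rfloor> \<le> t" "t < 2 * pw \<lfloor>log 2 t\<rfloor>"
proof -
  define l where "l = log 2 t"
  have tl: "t = 2 powr l" unfolding l_def using assms by simp
  have "pw \<lfloor>l\<rfloor> \<le> 2 powr l" unfolding pw_def by (intro powr_mono) auto
  then show "pw \<lfloor>log 2 t\<rfloor> \<le> t" using tl unfolding l_def by simp
  have "2 powr l < 2 powr (real_of_int \<lfloor>l\<rfloor> + 1)" by (intro powr_less_mono) linarith+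
  also have "\<dots> = 2 * pw \<lfloor>l\<rfloor>" unfolding pw_def by (simp add: powr_add)
  finally show "t < 2 * pw \<lfloor>log 2 t\<rfloor>" using tl unfolding l_def by simp
qed

context cells begin

definition Part :: "int \<Rightarrow> 'a set \<Rightarrow> 'a set set" where
  "Part M X = (\<lambda>\<kappa>. {y\<in>P. cell (top X) y = \<kappa>}) `
     PiE Basis (\<lambda>i. {cell (top X) (rep X) i - M .. cell (top X) (rep X) i + M})"

lemma Part_card: "card (Part (int M) X) \<le> (2*M+1)^DIM('a)"
proof -
  have "card (Part (int M) X) \<le> card (PiE (Basis::'a set) (\<lambda>i. {cell (top X) (rep X) i - int M .. cell (top X) (rep X) i + int M}))"
    unfolding Part_def by (rule card_image_le[OF box_finite])
  also have "\<dots> = (2*M+1)^DIM('a)" by (rule box_card)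
  finally show ?thesis .
qed

lemma Part_finite: "finite (Part M X)" unfolding Part_def by (simp add: finite_PiE)

lemma charge:
  assumes pq: "p \<in> P" "q \<in> P" and dd: "dist p q < 2 * c * real DIM('a) * pw j"
    and M: "2 * c * real DIM('a) \<le> real M"
    and S: "S = C j p" and T: "T = C j q" and SF: "S \<in> Fp" and TF: "T \<in> Fp"
    and le: "top S \<le> top T"
  shows "T \<in> Part (int M) S"
proof -
  define J where "J = top S"
  have pS: "p \<in> S" using S C_self[OF pq(1)] by simp
  have qT: "q \<in> T" using T C_self[OF pq(2)] by simp
  have jJ: "j \<le> J" unfolding J_def using top_props(2)[OF SF pq(1) S[symmetric]] .
  have SJ: "C J p = S" unfolding J_def using top3[OF SF pS] .
  have TJ: "C J q = T"
  proof
    show "C J q \<subseteq> T"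
    proof -
      have "C J q \<subseteq> C (top T) q" using le unfolding J_def by (rule C_mono)
      also have "\<dots> = T" using top3[OF TF qT] .
      finally show ?thesis .
    qed
    show "T \<subseteq> C J q" using T C_mono[OF jJ] by simp
  qed
  have rS: "cell J (rep S) = cell J p"
  proof -
    have "rep S \<in> C J p" using rep_in[OF SF] SJ by simp
    then show ?thesis unfolding C_def by simp
  qed
  have box: "cell J q \<in> PiE Basis (\<lambda>i. {cell J (rep S) i - int M .. cell J (rep S) i + int M})"
  proof -
    have "cell J q i \<in> {cell J p i - int M .. cell J p i + int M}" if i: "i \<in> Basis" for i
    proof -
      have a: "\<bar>real_of_int (cell J q i - cell J p i)\<bar> < dist q p / pw J + 1"
        using cell_close[OF i] .
      have "dist q p / pw J \<le> dist q p / pw j"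
        using pw_mono[OF jJ] by (intro divide_left_mono) (simp_all add: mult_pos_pos)
      also have "\<dots> < 2 * c * real DIM('a)" using dd by (simp add: dist_commute pos_divide_less_eq)
      finally have "\<bar>real_of_int (cell J q i - cell J p i)\<bar> < real M + 1" using a M by linarith
      then have "\<bar>cell J q i - cell J p i\<bar> < int M + 1" by linarith
      then show ?thesis by auto
    qed
    moreover have "cell J q \<in> extensional Basis" unfolding cell_def by (rule restrict_extensional)
    ultimately show ?thesis unfolding PiE_iff rS by blast
  qed
  have "T = {y\<in>P. cell J y = cell J q}" using TJ unfolding C_def by simp
  then show ?thesis unfolding Part_def J_def[symmetric] by (rule image_eqI[OF _ box])
qed

end



context cells begin

definition lev :: "real \<Rightarrow> 'a \<Rightarrow> 'a \<Rightarrow> int" where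
  "lev c p q = \<lfloor>log 2 (dist p q / (c * real DIM('a)))\<rfloor>"

lemma lev_sym: "lev c p q = lev c q p" by (simp add: lev_def dist_commute)

lemma lev_facts:
  assumes "p \<noteq> q" "c > 1"
  shows "real DIM('a) * pw (lev c p q) \<le> dist p q / c"
    and "dist p q < 2 * c * real DIM('a) * pw (lev c p q)"
proof -
  have dp: "real DIM('a) > 0" by simp
  have t: "dist p q / (c * real DIM('a)) > 0" using assms dp by simp
  note li = log_ivl[OF t]
  show "real DIM('a) * pw (lev c p q) \<le> dist p q / c"
    using li(1) assms dp unfolding lev_def by (simp add: field_simps)
  show "dist p q < 2 * c * real DIM('a) * pw (lev c p q)"
    using li(2) assms dp unfolding lev_def by (simp add: field_simps)
qed

lemma not_in_cell:
  assumes "p \<noteq> q" "c > 1" shows "q \<notin> C (lev c p q) p"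
proof
  assume "q \<in> C (lev c p q) p"
  then have a: "dist p q < real DIM('a) * pw (lev c p q)" by (rule C_diam)
  have b: "dist p q / c < dist p q" using assms by (simp add: divide_less_eq)
  show False using a b lev_facts(1)[OF assms] by linarith
qed

lemma sum_deg:
  assumes nc: "noconf c E" and c: "c > 1" and M: "2 * c * real DIM('a) \<le> real M"
    and edges: "\<And>u v. {u,v} \<in> E \<Longrightarrow> u \<in> P \<and> v \<in> P"
  shows "(\<Sum>v\<in>P. degree E v) \<le> 2 * card Fp * (2*M+1)^DIM('a)"
proof -
  define D where "D = {(p,q). p \<noteq> q \<and> {p,q} \<in> E}"
  define \<Phi> where "\<Phi> pq = (C (lev c (fst pq) (snd pq)) (fst pq), C (lev c (fst pq) (snd pq)) (snd pq))" for pq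
  have Dfacts: "p \<in> P" "q \<in> P" "p \<noteq> q" "{p,q} \<in> E" if "(p,q) \<in> D" for p q
    using that edges unfolding D_def by auto
  have inFp1: "C (lev c p q) p \<in> Fp" if "(p,q) \<in> D" for p q
  proof -
    have "C (lev c p q) p \<noteq> P" using not_in_cell[OF Dfacts(3)[OF that] c] Dfacts(2)[OF that] by auto
    then show ?thesis unfolding Fp_def using Dfacts(1)[OF that] by auto
  qed
  have Dsym: "(q,p) \<in> D" if "(p,q) \<in> D" for p q
    using that unfolding D_def by (auto simp: insert_commute)
  have inFp2: "C (lev c p q) q \<in> Fp" if "(p,q) \<in> D" for p q
    using inFp1[OF Dsym[OF that]] lev_sym by simp
  have inj: "inj_on \<Phi> D"
  proof (rule inj_onI)
    fix x y assume x: "x \<in> D" and y: "y \<in> D" and eq: "\<Phi> x = \<Phi> y"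
    obtain p q where x': "x = (p,q)" by (cases x)
    obtain p' q' where y': "y = (p',q')" by (cases y)
    define j where "j = lev c p q"
    define j' where "j' = lev c p' q'"
    have D1: "(p,q) \<in> D" and D2: "(p',q') \<in> D" using x y x' y' by auto
    have e1: "C j p = C j' p'" and e2: "C j q = C j' q'" using eq x' y' unfolding \<Phi>_def j_def j'_def by auto
    have P1: "p \<in> P" "q \<in> P" "p' \<in> P" "q' \<in> P" using Dfacts D1 D2 by auto
    have lf1: "real DIM('a) * pw j \<le> dist p q / c" unfolding j_def by (rule lev_facts(1)[OF Dfacts(3)[OF D1] c])
    have lf2: "real DIM('a) * pw j' \<le> dist p' q' / c" unfolding j'_def by (rule lev_facts(1)[OF Dfacts(3)[OF D2] c])
    have close: "dist a a' \<le> min (dist p q) (dist p' q') / c"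
      if "C j a = C j' a'" "a \<in> P" "a' \<in> P" for a a'
    proof -
      have "a' \<in> C j a" using that C_self by simp
      then have "dist a a' < real DIM('a) * pw j" by (rule C_diam)
      then have 1: "dist a a' \<le> dist p q / c" using lf1 by simp
      have "a \<in> C j' a'" using that C_self by metis
      then have "dist a' a < real DIM('a) * pw j'" by (rule C_diam)
      then have 2: "dist a a' \<le> dist p' q' / c" using lf2 by (simp add: dist_commute)
      have "min (dist p q) (dist p' q') / c = min (dist p q / c) (dist p' q' / c)"
        using c by (simp add: min_divide_distrib_right)
      then show ?thesis using 1 2 by simp
    qed
    have "{p,q} = {p',q'}"
    proof (rule ccontr)
      assume "{p,q} \<noteq> {p',q'}"
      then show False using nc Dfacts(4)[OF D1] Dfacts(4)[OF D2] close[OF e1 P1(1) P1(3)] close[OF e2 P1(2) P1(4)]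
        unfolding noconf_def by blast
    qed
    then consider "p = p' \<and> q = q'" | "p = q' \<and> q = p'" by (auto simp: doubleton_eq_iff)
    then show "x = y"
    proof cases
      case 1 then show ?thesis using x' y' by simp
    next
      case 2
      have "j' = j" unfolding j_def j'_def using 2 lev_sym by simp
      then have "C j p = C j q" using e2 2 by simp
      then have "q \<in> C j p" using C_self[OF P1(2)] by simp
      then show ?thesis using not_in_cell[OF Dfacts(3)[OF D1] c] unfolding j_def by simp
    qed
  qed
  define U where "U = (\<Union>X\<in>Fp. ({X} \<times> Part (int M) X) \<union> (Part (int M) X \<times> {X}))"
  have sub: "\<Phi> ` D \<subseteq> U"
  proof
    fix z assume "z \<in> \<Phi> ` D"
    then obtain p q where pq: "(p,q) \<in> D" "z = \<Phi> (p,q)" by auto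
    define j where "j = lev c p q"
    define S where "S = C j p"
    define T where "T = C j q"
    have z: "z = (S, T)" unfolding pq(2) \<Phi>_def S_def T_def j_def by simp
    have SF: "S \<in> Fp" unfolding S_def j_def by (rule inFp1[OF pq(1)])
    have TF: "T \<in> Fp" unfolding T_def j_def by (rule inFp2[OF pq(1)])
    have dd: "dist p q < 2 * c * real DIM('a) * pw j" unfolding j_def by (rule lev_facts(2)[OF Dfacts(3)[OF pq(1)] c])
    consider "top S \<le> top T" | "top T \<le> top S" by linarith
    then show "z \<in> U"
    proof cases
      case 1
      have "T \<in> Part (int M) S"
        by (rule charge[OF Dfacts(1,2)[OF pq(1)] dd M S_def T_def SF TF 1])
      then show ?thesis unfolding U_def z using SF by blast
    next
      case 2
      have dd': "dist q p < 2 * c * real DIM('a) * pw j" using dd by (simp add: dist_commute)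
      have "S \<in> Part (int M) T"
        by (rule charge[OF Dfacts(2,1)[OF pq(1)] dd' M T_def S_def TF SF 2])
      then show ?thesis unfolding U_def z using TF by blast
    qed
  qed
  have finU: "finite U" unfolding U_def using Fp_finite Part_finite by auto
  have "card D = card (\<Phi> ` D)" using card_image[OF inj] by simp
  also have "\<dots> \<le> card U" by (rule card_mono[OF finU sub])
  also have "\<dots> \<le> (\<Sum>X\<in>Fp. card (({X} \<times> Part (int M) X) \<union> (Part (int M) X \<times> {X})))"
    unfolding U_def by (rule card_UN_le[OF Fp_finite])
  also have "\<dots> \<le> (\<Sum>X\<in>Fp. 2 * (2*M+1)^DIM('a))"
  proof (rule sum_mono)
    fix X
    have "card (({X} \<times> Part (int M) X) \<union> (Part (int M) X \<times> {X}))
          \<le> card ({X} \<times> Part (int M) X) + card (Part (int M) X \<times> {X})" by (rule card_Un_le)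
    also have "\<dots> = card (Part (int M) X) + card (Part (int M) X)" by (simp add: card_cartesian_product)
    also have "\<dots> \<le> 2 * (2*M+1)^DIM('a)" using Part_card[of M X] by simp
    finally show "card (({X} \<times> Part (int M) X) \<union> (Part (int M) X \<times> {X})) \<le> 2 * (2*M+1)^DIM('a)" .
  qed
  also have "\<dots> = 2 * card Fp * (2*M+1)^DIM('a)" by simp
  finally have cD: "card D \<le> 2 * card Fp * (2*M+1)^DIM('a)" .
  have DS: "D = Sigma P (\<lambda>v. {u. u \<noteq> v \<and> {v,u} \<in> E})" unfolding D_def using edges by auto
  have finN: "finite {u. u \<noteq> v \<and> {v,u} \<in> E}" for v
  proof -
    have "{u. u \<noteq> v \<and> {v,u} \<in> E} \<subseteq> P" using edges by auto
    then show ?thesis using finP finite_subset by blast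
  qed
  have "(\<Sum>v\<in>P. degree E v) = card D"
    unfolding DS degree_def by (rule card_SigmaI[symmetric]) (use finP finN in auto)
  then show ?thesis using cD by simp
qed

end



lemma cells_exist:
  fixes P :: "'a::euclidean_space set" assumes "finite P"
  shows "\<exists>R0 J0 f. cells P R0 J0 f"
proof -
  obtain f n where f: "f ` P = {i::nat. i < n}" "inj_on f P" using finite_imp_inj_to_nat_seg[OF assms] by blast
  define R0 where "R0 = (\<Sum>p\<in>P. norm p)"
  have R: "norm p \<le> R0" if "p \<in> P" for p
    unfolding R0_def using assms that by (intro member_le_sum) auto
  define N where "N = nat \<lceil>2 * R0\<rceil>"
  have a: "2 * R0 \<le> real N" unfolding N_def by linarith
  have b: "real N < 2 ^ N" using less_exp[of N] by (metis of_nat_less_iff of_nat_numeral of_nat_power)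
  have c: "pw (int N) = 2 ^ N" unfolding pw_def by (simp add: powr_realpow)
  have "2 * R0 < pw (int N)" using a b c by linarith
  then have "cells P R0 (int N) f" using assms R f(2) by (unfold_locales) auto
  then show ?thesis by blast
qed

lemma const_bound:
  fixes s :: real and d :: nat
  assumes "s > 1" "d \<ge> 1"
  shows "real (2 * nat \<lceil>2 * (2 * s + 2) * real d\<rceil> + 1) ^ d \<le> (19 * real d) ^ d * s ^ d"
proof -
  define M where "M = nat \<lceil>2 * (2 * s + 2) * real d\<rceil>"
  define x where "x = 2 * (2 * s + 2) * real d"
  have x0: "0 \<le> x" unfolding x_def using assms by simp
  have "real M = real_of_int \<lceil>x\<rceil>" unfolding M_def x_def[symmetric] using x0 by simp
  then have "real M \<le> 2 * (2 * s + 2) * real d + 1" unfolding x_def by linarith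
  then have "real (2 * M + 1) \<le> 8 * s * real d + 8 * real d + 3" by (simp add: algebra_simps)
  also have "\<dots> \<le> 19 * real d * s"
  proof -
    have "8 * real d \<le> 8 * s * real d" using assms by simp
    moreover have "3 \<le> 3 * s * real d" using assms
      by (metis mult.right_neutral mult_le_cancel_left_pos mult_mono' less_imp_le of_nat_1 of_nat_mono zero_le_one zero_less_numeral)
    ultimately show ?thesis by (simp add: algebra_simps)
  qed
  finally have "real (2 * M + 1) ^ d \<le> (19 * real d * s) ^ d" by (intro power_mono) auto
  then show ?thesis unfolding M_def by (simp add: power_mult_distrib)
qed




lemma main_bounds:
  fixes P :: "'a::euclidean_space set" and s :: real and ord :: "('a \<times> 'a) list"
  assumes finP: "finite P" and cP: "card P \<ge> 2" and s1: "s > 1"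
    and ordset: "set ord = {(p, q). p \<in> P \<and> q \<in> P \<and> p \<noteq> q}"
  shows "\<forall>v\<in>P. real (degree (uncoord_graph s ord) v)
            \<le> (19 * real DIM('a)) ^ DIM('a) * (1 + log 2 (aspect_ratio P)) * s ^ DIM('a)"
    and "(\<Sum>v\<in>P. real (degree (uncoord_graph s ord) v)) / real (card P)
            \<le> 4 * (19 * real DIM('a)) ^ DIM('a) * s ^ DIM('a)"
proof -
  define E where "E = uncoord_graph s ord"
  define c where "c = 2 * s + 2"
  define d where "d = DIM('a)"
  define K0 where "K0 = (19 * real d) ^ d"
  define M where "M = nat \<lceil>2 * c * real d\<rceil>"
  have c1: "c > 1" and c0: "c > 0" unfolding c_def using s1 by auto
  have nc: "noconf c E" unfolding E_def c_def using graph_props(1)[OF s1 ordset] .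
  have edges: "\<And>u v. {u,v} \<in> E \<Longrightarrow> u \<in> P \<and> v \<in> P \<and> u \<noteq> v"
    unfolding E_def using graph_props(2)[OF s1 ordset] by blast
  have Mc: "2 * c * real DIM('a) \<le> real M" unfolding M_def d_def by (rule real_nat_ceiling_ge)
  have d1: "d \<ge> 1" unfolding d_def by (simp add: DIM_positive Suc_leI)
  have cb: "real ((2*M+1)^DIM('a)) \<le> K0 * s ^ DIM('a)"
    using const_bound[OF s1 d1] unfolding K0_def M_def c_def d_def by (simp add: of_nat_power)
  have K0: "K0 \<ge> 0" unfolding K0_def by simp
  have finN: "finite {u. u \<noteq> v \<and> {v,u} \<in> E}" for v
  proof -
    have "{u. u \<noteq> v \<and> {v,u} \<in> E} \<subseteq> P" using edges by blast
    then show ?thesis using finP finite_subset by blast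
  qed
  define Dset where "Dset = {dist u v | u v. u \<in> P \<and> v \<in> P \<and> u \<noteq> v}"
  define Dall where "Dall = {dist u v | u v. u \<in> P \<and> v \<in> P}"
  have finDall: "finite Dall"
  proof -
    have "Dall \<subseteq> (\<lambda>(u,v). dist u v) ` (P \<times> P)" unfolding Dall_def by auto
    then show ?thesis using finP by (meson finite_SigmaI finite_imageI finite_subset)
  qed
  have DsD: "Dset \<subseteq> Dall" unfolding Dset_def Dall_def by auto
  have finDset: "finite Dset" using finite_subset[OF DsD finDall] .
  obtain u0 where u0: "u0 \<in> P" using cP by fastforce
  have "card (P - {u0}) \<ge> 1" using cP u0 finP by simp
  then have "P - {u0} \<noteq> {}" by (metis card.empty not_one_le_zero)
  then obtain v0 where v0: "v0 \<in> P" "v0 \<noteq> u0" by blast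
  have d00: "dist u0 v0 \<in> Dset" unfolding Dset_def using u0 v0 by blast
  define \<delta> where "\<delta> = Min Dset"
  define \<Delta> where "\<Delta> = Max Dall"
  have \<delta>in: "\<delta> \<in> Dset" unfolding \<delta>_def using finDset d00 by (intro Min_in) auto
  have \<delta>pos: "\<delta> > 0" using \<delta>in unfolding Dset_def by auto
  have \<delta>le: "\<delta> \<le> dist u v" if "u \<in> P" "v \<in> P" "u \<noteq> v" for u v
    unfolding \<delta>_def using finDset that by (intro Min_le) (auto simp: Dset_def)
  have \<Delta>ge: "dist u v \<le> \<Delta>" if "u \<in> P" "v \<in> P" for u v
    unfolding \<Delta>_def using finDall that by (intro Max_ge) (auto simp: Dall_def)
  have alpha: "aspect_ratio P = \<Delta> / \<delta>" unfolding aspect_ratio_def \<Delta>_def \<delta>_def Dall_def Dset_def ..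
  have a1: "\<Delta> / \<delta> \<ge> 1" using \<delta>le[OF u0 v0(1) v0(2)[symmetric]] \<Delta>ge[OF u0 v0(1)] \<delta>pos by simp
  have lg0: "log 2 (\<Delta> / \<delta>) \<ge> 0" using a1 by simp
  show "\<forall>v\<in>P. real (degree (uncoord_graph s ord) v)
            \<le> (19 * real DIM('a)) ^ DIM('a) * (1 + log 2 (aspect_ratio P)) * s ^ DIM('a)"
  proof
    fix v assume vP: "v \<in> P"
    have rng: "\<delta> \<le> dist v u \<and> dist v u \<le> \<Delta>" if "u \<noteq> v" "{v,u} \<in> E" for u
      using edges[OF that(2)] \<delta>le \<Delta>ge that(1) by auto
    have db: "degree E v \<le> (nat \<lfloor>log 2 (\<Delta>/\<delta>)\<rfloor> + 1) * (2*M+1)^DIM('a)"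
      by (rule degree_bound[OF nc c0 \<delta>pos Mc finN rng])
    have k: "real (nat \<lfloor>log 2 (\<Delta>/\<delta>)\<rfloor> + 1) \<le> 1 + log 2 (\<Delta>/\<delta>)" using lg0 by linarith
    have "real (degree E v) \<le> real (nat \<lfloor>log 2 (\<Delta>/\<delta>)\<rfloor> + 1) * real ((2*M+1)^DIM('a))"
      using db by (metis of_nat_le_iff of_nat_mult)
    also have "\<dots> \<le> (1 + log 2 (\<Delta>/\<delta>)) * (K0 * s ^ DIM('a))"
      by (rule mult_mono[OF k cb]) (use lg0 in auto)
    finally show "real (degree (uncoord_graph s ord) v)
            \<le> (19 * real DIM('a)) ^ DIM('a) * (1 + log 2 (aspect_ratio P)) * s ^ DIM('a)"
      unfolding E_def[symmetric] alpha K0_def d_def by (simp add: algebra_simps)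
  qed
  obtain R0 J0 f where CL: "cells P R0 J0 f" using cells_exist[OF finP] by blast
  have edges': "\<And>u v. {u,v} \<in> E \<Longrightarrow> u \<in> P \<and> v \<in> P" using edges by blast
  have sd: "(\<Sum>v\<in>P. degree E v) \<le> 2 * card (cells.Fp P R0) * (2*M+1)^DIM('a)"
    by (rule cells.sum_deg[OF CL nc c1 Mc edges'])
  also have "\<dots> \<le> 2 * (2 * card P) * (2*M+1)^DIM('a)"
    using cells.card_Fp[OF CL] by simp
  finally have sd2: "real (\<Sum>v\<in>P. degree E v) \<le> 4 * real (card P) * real ((2*M+1)^DIM('a))"
    by (metis (no_types, lifting) mult.assoc mult_2 numeral_Bit0 of_nat_le_iff of_nat_mult of_nat_numeral)
  have "(\<Sum>v\<in>P. real (degree E v)) \<le> 4 * real (card P) * (K0 * s ^ DIM('a))"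
  proof -
    have "(\<Sum>v\<in>P. real (degree E v)) = real (\<Sum>v\<in>P. degree E v)" by simp
    also have "\<dots> \<le> 4 * real (card P) * real ((2*M+1)^DIM('a))" by (rule sd2)
    also have "\<dots> \<le> 4 * real (card P) * (K0 * s ^ DIM('a))" by (rule mult_left_mono[OF cb]) simp
    finally show ?thesis .
  qed
  moreover have "real (card P) > 0" using cP by simp
  ultimately have "(\<Sum>v\<in>P. real (degree E v)) / real (card P) \<le> 4 * (K0 * s ^ DIM('a))"
    by (simp add: divide_le_eq algebra_simps)
  then show "(\<Sum>v\<in>P. real (degree (uncoord_graph s ord) v)) / real (card P)
            \<le> 4 * (19 * real DIM('a)) ^ DIM('a) * s ^ DIM('a)"
    unfolding E_def[symmetric] K0_def d_def by (simp add: algebra_simps)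
qed

theorem theorem10:
  "\<exists>C>0. \<forall>(P :: 'a::euclidean_space set) (s::real) (ord :: ('a \<times> 'a) list).
     finite P \<and> card P \<ge> 2 \<and> s > 1 \<and> distinct ord \<and>
     set ord = {(p, q). p \<in> P \<and> q \<in> P \<and> p \<noteq> q} \<longrightarrow>
       (\<forall>v\<in>P. real (degree (uncoord_graph s ord) v)
                  \<le> C * (1 + log 2 (aspect_ratio P)) * s ^ DIM('a)) \<and>
       (\<Sum>v\<in>P. real (degree (uncoord_graph s ord) v)) / real (card P) \<le> C * s ^ DIM('a)"
proof (intro exI conjI allI impI)
  define K0 where "K0 = (19 * real DIM('a)) ^ DIM('a)"
  have K0: "K0 > 0" unfolding K0_def by simp
  show "4 * K0 > 0" using K0 by simp
  fix P :: "'a set" and s :: real and ord :: "('a \<times> 'a) list"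
  assume H: "finite P \<and> card P \<ge> 2 \<and> s > 1 \<and> distinct ord \<and> set ord = {(p, q). p \<in> P \<and> q \<in> P \<and> p \<noteq> q}"
  have s1: "s > 1" using H by simp
  note mb = main_bounds[of P s ord, folded K0_def]
  show "\<forall>v\<in>P. real (degree (uncoord_graph s ord) v) \<le> 4 * K0 * (1 + log 2 (aspect_ratio P)) * s ^ DIM('a)"
  proof
    fix v assume v: "v \<in> P"
    have "real (degree (uncoord_graph s ord) v) \<le> K0 * (1 + log 2 (aspect_ratio P)) * s ^ DIM('a)"
      using mb(1) H v by blast
    also have "\<dots> \<le> 4 * K0 * (1 + log 2 (aspect_ratio P)) * s ^ DIM('a)"
    proof -
      have "0 \<le> K0 * (1 + log 2 (aspect_ratio P)) * s ^ DIM('a)"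
        using \<open>real (degree _ v) \<le> _\<close> by (meson of_nat_0_le_iff order_trans)
      then show ?thesis by linarith
    qed
    finally show "real (degree (uncoord_graph s ord) v) \<le> 4 * K0 * (1 + log 2 (aspect_ratio P)) * s ^ DIM('a)" .
  qed
  show "(\<Sum>v\<in>P. real (degree (uncoord_graph s ord) v)) / real (card P) \<le> 4 * K0 * s ^ DIM('a)"
    using mb(2) H by (simp add: mult.assoc)
qed


end
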